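(* Let $\mathbb V,\mathbb W$ be separable Banach spaces, $\mathcal P_N^{\mathbb V},\mathcal P_N^{\mathbb W}$ finite-dimensional projections converging strongly to the identity on $\mathbb V,\mathbb W$, and let $\mathcal L=\mathcal L_0+\mathcal L_1$, $\mathcal N=\mathcal N_0+\mathcal N_1$, $\mathcal N_{1,N}$, $\mathcal K_N$, $\mathcal K$ satisfy all of the following: $\mathcal L:\mathbb V\to\mathbb W$ is admissible and invertible with invertible left-Fredholm regulator $\mathcal N$, $\mathcal N\mathcal L=\mathrm{id}-\mathcal K$ with $\mathcal K$ compact; $\mathcal N_{1,N}:\operatorname{ran}\mathcal P_N^{\mathbb W}\to\operatorname{ran}\mathcal P_N^{\mathbb V}$ and $\mathcal K_N:\mathbb V\to\mathbb V$ satisfy $(\mathcal N_0+\mathcal N_{1,N})(\mathcal L_0+\mathcal P_N^{\mathbb W}\mathcal L_1)=\mathrm{id}-\mathcal K_N$ on $\operatorname{ran}\mathcal P_N^{\mathbb V}$ and $\|\mathcal K_N-\mathcal K\|_{\mathbb V}\to0$; and $\dim\operatorname{ran}\mathcal P_N^{\mathbb V}=\dim\operatorname{ran}\mathcal P_N^{\mathbb W}$. Let $\mathbb W'\subset\mathbb W$ be a dense subspace and $\mathcal I_N^{\mathbb W}$ projections with $\|u-\mathcal I_N^{\mathbb W}u\|_{\mathbb W}\to0$ for every $u\in\mathbb W'$ and $\mathcal I_N^{\mathbb W}\mathbb W'=\operatorname{ran}\mathcal P_N^{\mathbb W}$. Suppose that, for sufficiently large $N$, $\mathcal L_0+\mathcal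 I_N^{\mathbb W}\mathcal L_1:\operatorname{ran}\mathcal P_N^{\mathbb V}\to\operatorname{ran}\mathcal P_N^{\mathbb W}$ is invertible. Then for $f\in\mathbb W'$ and such $N$, $$\|(\mathcal L_0+\mathcal P_N^{\mathbb W}\mathcal L_1)^{-1}\mathcal P_N^{\mathbb W}f-(\mathcal L_0+\mathcal I_N^{\mathbb W}\mathcal L_1)^{-1}\mathcal I_N^{\mathbb W}f\|_{\mathbb V}\le\|(\mathcal L_0+\mathcal I_N^{\mathbb W}\mathcal L_1)^{-1}\|_{\operatorname{ran}\mathcal I_N^{\mathbb W}\to\operatorname{ran}\mathcal P_N^{\mathbb V}}\,\|(\mathcal I_N^{\mathbb W}-\mathcal P_N^{\mathbb W})(f-\mathcal L_1u_N)\|_{\mathbb W},$$ where $u_N=(\mathcal L_0+\mathcal P_N^{\mathbb W}\mathcal L_1)^{-1}\mathcal P_N^{\mathbb W}f$.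
   Context: A bounded linear operator $\mathcal L:\mathbb V\to\mathbb W$ is left Fredholm with regulator $\mathcal N:\mathbb W\to\mathbb V$ if $\mathcal N\mathcal L=\mathrm{id}-\mathcal K$ with $\mathcal K$ compact on $\mathbb V$. It is admissible if $\mathcal L=\mathcal L_0+\mathcal L_1$ with $\mathcal L_0\mathcal P_N^{\mathbb V}=\mathcal P_N^{\mathbb W}\mathcal L_0$, $\mathcal L$ is left Fredholm with regulator $\mathcal N$, and $\mathcal N=\mathcal N_0+\mathcal N_1$ with $\mathcal N_0\mathcal P_N^{\mathbb W}=\mathcal P_N^{\mathbb V}\mathcal N_0$. *)

theory Defs
  imports "HOL-Analysis.Analysis"
begin

definition compact_operator :: "('a::real_normed_vector \<Rightarrow> 'b::real_normed_vector) \<Rightarrow> bool" where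
  "compact_operator K \<longleftrightarrow> bounded_linear K \<and> compact (closure (K ` cball 0 1))"

definition fin_dim_subspace :: "'a::real_vector set \<Rightarrow> bool" where
  "fin_dim_subspace S \<longleftrightarrow> (\<exists>B. finite B \<and> S = span B)"

definition bounded_projection :: "('a::real_normed_vector \<Rightarrow> 'a) \<Rightarrow> bool" where
  "bounded_projection P \<longleftrightarrow> bounded_linear P \<and> (\<forall>x. P (P x) = P x)"

definition left_fredholm ::
  "('v::real_normed_vector \<Rightarrow> 'w::real_normed_vector) \<Rightarrow> ('w \<Rightarrow> 'v) \<Rightarrow> bool" where
  "left_fredholm L R \<longleftrightarrow> bounded_linear L \<and> bounded_linear R \<and>
     compact_operator (\<lambda>x. x - R (L x))"

definition admissible ::
  "(nat \<Rightarrow> 'v::real_normed_vector \<Rightarrow> 'v) \<Rightarrow> (nat \<Rightarrow> 'w::real_normed_vector \<Rightarrow> 'w) \<Rightarrow>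
   ('v \<Rightarrow> 'w) \<Rightarrow> ('v \<Rightarrow> 'w) \<Rightarrow> ('v \<Rightarrow> 'w) \<Rightarrow>
   ('w \<Rightarrow> 'v) \<Rightarrow> ('w \<Rightarrow> 'v) \<Rightarrow> ('w \<Rightarrow> 'v) \<Rightarrow> bool" where
  "admissible PV PW L L0 L1 R R0 R1 \<longleftrightarrow>
     bounded_linear L0 \<and> bounded_linear L1 \<and> (\<forall>x. L x = L0 x + L1 x) \<and>
     (\<forall>N x. L0 (PV N x) = PW N (L0 x)) \<and>
     left_fredholm L R \<and>
     bounded_linear R0 \<and> bounded_linear R1 \<and> (\<forall>y. R y = R0 y + R1 y) \<and>
     (\<forall>N y. R0 (PW N y) = PV N (R0 y))"

text \<open>Operator norm of T restricted to the subspace S (S is a finite-dimensional subspace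
  in all uses, so the supremum is finite).\<close>
definition opnorm_on :: "'a::real_normed_vector set \<Rightarrow> ('a \<Rightarrow> 'b::real_normed_vector) \<Rightarrow> real" where
  "opnorm_on S T = Sup ((\<lambda>x. norm (T x)) ` {x \<in> S. norm x \<le> 1})"

end

theory Submission
  imports Defs
begin


lemma fd_bound:
  fixes C :: "'a::real_normed_vector set"
  assumes "finite C"
  shows "closed (span C) \<and> (\<forall>g::'a\<Rightarrow>'b::real_normed_vector. linear g \<longrightarrow>
           (\<exists>M. \<forall>y\<in>span C. norm (g y) \<le> M * norm y))"
  using assms
proof (induction C rule: finite_induct)
  case empty
  have "\<exists>M. \<forall>y\<in>span {}. norm (g y) \<le> M * norm y" if "linear g" for g :: "'a \<Rightarrow> 'b"
    using that by (intro exI[of _ 0]) (simp add: linear_0)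
  then show ?case by simp
next
  case (insert a A)
  show ?case
  proof (cases "a \<in> span A")
    case True
    then show ?thesis using insert.IH by (simp add: span_redundant)
  next
    case False
    define S0 where "S0 = span A"
    have clS0: "closed S0" using insert.IH S0_def by simp
    have "0 \<in> S0" unfolding S0_def by (simp add: span_zero)
    then have dpos: "infdist a S0 > 0"
      using infdist_pos_not_in_closed[OF clS0] False S0_def by auto
    define d where "d = infdist a S0"
    have key: "\<bar>t\<bar> * d \<le> norm (t *\<^sub>R a + z)" if "z \<in> S0" for t z
    proof (cases "t = 0")
      case True then show ?thesis by simp
    next
      case False
      have "- ((1/t) *\<^sub>R z) \<in> S0" using that unfolding S0_def
        by (simp add: span_neg span_scale)
      then have "d \<le> dist a (- ((1/t) *\<^sub>R z))" unfolding d_def by (rule infdist_le)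
      also have "\<dots> = norm (a + (1/t) *\<^sub>R z)" by (simp add: dist_norm)
      finally have "\<bar>t\<bar> * d \<le> \<bar>t\<bar> * norm (a + (1/t) *\<^sub>R z)"
        by (simp add: mult_left_mono)
      also have "\<dots> = norm (t *\<^sub>R (a + (1/t) *\<^sub>R z))" by simp
      also have "t *\<^sub>R (a + (1/t) *\<^sub>R z) = t *\<^sub>R a + z"
        using False by (simp add: scaleR_add_right)
      finally show ?thesis .
    qed
    have sp: "span (insert a A) = {x. \<exists>k. x - k *\<^sub>R a \<in> S0}"
      unfolding S0_def by (rule span_insert)
    have closed_new: "closed (span (insert a A))"
      unfolding closed_sequential_limits
    proof (intro allI impI, elim conjE)
      fix y l assume yS: "\<forall>n. y n \<in> span (insert a A)" and yl: "y \<longlonglongrightarrow> l"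
      have "\<forall>n. \<exists>k. y n - k *\<^sub>R a \<in> S0" using yS sp by blast
      then obtain k where k0: "\<forall>n. y n - k n *\<^sub>R a \<in> S0" by metis
      then have k: "\<And>n. y n - k n *\<^sub>R a \<in> S0" by blast
      have kbound: "\<bar>k m - k n\<bar> * d \<le> norm (y m - y n)" for m n
      proof -
        have "(y m - k m *\<^sub>R a) - (y n - k n *\<^sub>R a) \<in> S0"
          using k unfolding S0_def by (simp add: span_diff)
        from key[OF this, of "k m - k n"]
        show ?thesis by (simp add: algebra_simps)
      qed
      have "Cauchy k"
      proof (rule metric_CauchyI)
        fix e :: real assume "e > 0"
        then have "e * d > 0" using dpos d_def by simp
        from LIMSEQ_imp_Cauchy[OF yl] this obtain M where
          M: "\<And>m n. m \<ge> M \<Longrightarrow> n \<ge> M \<Longrightarrow> dist (y m) (y n) < e * d"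
          unfolding Cauchy_def by blast
        show "\<exists>M. \<forall>m\<ge>M. \<forall>n\<ge>M. dist (k m) (k n) < e"
        proof (intro exI allI impI)
          fix m n assume "m \<ge> M" "n \<ge> M"
          then have "\<bar>k m - k n\<bar> * d < e * d"
            using kbound[of m n] M[of m n] by (simp add: dist_norm)
          then show "dist (k m) (k n) < e" using dpos d_def
            by (simp add: dist_real_def)
        qed
      qed
      then obtain t where kt: "k \<longlonglongrightarrow> t"
        using Cauchy_convergent_iff convergent_def by blast
      have "(\<lambda>n. y n - k n *\<^sub>R a) \<longlonglongrightarrow> l - t *\<^sub>R a"
        by (intro tendsto_intros yl kt)
      then have "l - t *\<^sub>R a \<in> S0"
        using closed_sequentially[OF clS0, of "\<lambda>n. y n - k n *\<^sub>R a"] k by blast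
      then show "l \<in> span (insert a A)" using sp by blast
    qed
    have bound_new: "\<exists>M. \<forall>y\<in>span (insert a A). norm (g y) \<le> M * norm y"
      if lg: "linear g" for g :: "'a \<Rightarrow> 'b"
    proof -
      obtain M0 where M0: "\<forall>y\<in>S0. norm (g y) \<le> M0 * norm y"
        using insert.IH lg S0_def by blast
      define M1 where "M1 = \<bar>M0\<bar>"
      have M1: "\<forall>y\<in>S0. norm (g y) \<le> M1 * norm y" "M1 \<ge> 0"
        using M0 M1_def by (auto intro: order_trans[OF _ mult_right_mono])
      show ?thesis
      proof (intro exI ballI)
        fix y assume "y \<in> span (insert a A)"
        then obtain k where kz: "y - k *\<^sub>R a \<in> S0" using sp by blast
        define z where "z = y - k *\<^sub>R a"
        have yz: "y = k *\<^sub>R a + z" unfolding z_def by simp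
        have kd: "\<bar>k\<bar> * d \<le> norm y" using key[OF kz[folded z_def]] yz by simp
        have kle: "\<bar>k\<bar> \<le> norm y / d" using kd dpos d_def by (simp add: field_simps)
        have "g y = k *\<^sub>R g a + g z" using yz lg by (simp add: linear_add linear_scale)
        then have h1: "norm (g y) \<le> \<bar>k\<bar> * norm (g a) + norm (g z)"
          by (metis norm_scaleR norm_triangle_ineq)
        have h2: "norm (g z) \<le> M1 * norm z" using M1 kz z_def by blast
        have h3: "norm z \<le> norm y + \<bar>k\<bar> * norm a" unfolding z_def
          by (metis norm_scaleR norm_triangle_ineq4)
        have h4: "M1 * norm z \<le> M1 * (norm y + \<bar>k\<bar> * norm a)"
          using h3 M1(2) by (rule mult_left_mono)
        have "norm (g y) \<le> \<bar>k\<bar> * (norm (g a) + M1 * norm a) + M1 * norm y"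
          using h1 h2 h4 by (simp add: algebra_simps)
        also have "\<dots> \<le> (norm y / d) * (norm (g a) + M1 * norm a) + M1 * norm y"
          using kle M1(2) by (intro add_right_mono mult_right_mono) auto
        also have "\<dots> = ((norm (g a) + M1 * norm a) / d + M1) * norm y"
          by (simp add: algebra_simps add_divide_distrib)
        finally show "norm (g y) \<le> ((norm (g a) + M1 * norm a) / d + M1) * norm y" .
      qed
    qed
    show ?thesis using closed_new bound_new by blast
  qed
qed


lemma opnorm_on_le:
  fixes g :: "'a::real_normed_vector \<Rightarrow> 'b::real_normed_vector"
  assumes S: "subspace S"
    and bd: "\<forall>x\<in>S. norm (g x) \<le> M * norm x"
    and sc: "\<forall>x\<in>S. \<forall>c. g (c *\<^sub>R x) = c *\<^sub>R g x"
    and y: "y \<in> S"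
  shows "norm (g y) \<le> opnorm_on S g * norm y"
proof (cases "y = 0")
  case True
  have "g 0 = 0" using sc S subspace_0[OF S] by (metis scale_zero_left)
  then show ?thesis using True by simp
next
  case False
  define x where "x = (1 / norm y) *\<^sub>R y"
  have xS: "x \<in> S" unfolding x_def using S y by (simp add: subspace_scale)
  have nx: "norm x = 1" unfolding x_def using False by simp
  have bdd: "bdd_above ((\<lambda>x. norm (g x)) ` {x \<in> S. norm x \<le> 1})"
  proof (rule bdd_aboveI2)
    fix u assume "u \<in> {x \<in> S. norm x \<le> 1}"
    then have "norm (g u) \<le> M * norm u" "norm u \<le> 1" "norm u \<ge> 0" using bd by auto
    then show "norm (g u) \<le> \<bar>M\<bar>"
      by (smt (verit) mult_le_cancel_left1 mult_minus_left mult_nonneg_nonneg abs_ge_self abs_ge_zero mult_right_mono)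
  qed
  have "norm (g x) \<le> opnorm_on S g"
    unfolding opnorm_on_def using xS nx by (intro cSup_upper[OF _ bdd]) auto
  moreover have "g y = norm y *\<^sub>R g x"
    using sc y False unfolding x_def by simp
  ultimately show ?thesis by (simp add: mult.commute mult_left_mono)
qed

lemma inv_lin:
  fixes F :: "'a::real_vector \<Rightarrow> 'b::real_vector"
  assumes lin: "linear F" and bij: "bij_betw F S T" and S: "subspace S"
    and y: "y \<in> T" and z: "z \<in> T"
  shows "the_inv_into S F (y + z) = the_inv_into S F y + the_inv_into S F z"
    and "the_inv_into S F (c *\<^sub>R y) = c *\<^sub>R the_inv_into S F y"
proof -
  have inj: "inj_on F S" using bij bij_betw_def by blast
  have a: "the_inv_into S F y \<in> S" "F (the_inv_into S F y) = y"
    using bij y by (auto intro: the_inv_into_into f_the_inv_into_f_bij_betw simp: bij_betw_def)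
  have b: "the_inv_into S F z \<in> S" "F (the_inv_into S F z) = z"
    using bij z by (auto intro: the_inv_into_into f_the_inv_into_f_bij_betw simp: bij_betw_def)
  have "F (the_inv_into S F y + the_inv_into S F z) = y + z"
    using a b lin by (simp add: linear_add)
  moreover have "the_inv_into S F y + the_inv_into S F z \<in> S"
    using a b S by (simp add: subspace_add)
  ultimately show "the_inv_into S F (y + z) = the_inv_into S F y + the_inv_into S F z"
    using the_inv_into_f_f[OF inj] by metis
  have "F (c *\<^sub>R the_inv_into S F y) = c *\<^sub>R y"
    using a lin by (simp add: linear_scale)
  moreover have "c *\<^sub>R the_inv_into S F y \<in> S"
    using a S by (simp add: subspace_scale)
  ultimately show "the_inv_into S F (c *\<^sub>R y) = c *\<^sub>R the_inv_into S F y"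
    using the_inv_into_f_f[OF inj] by metis
qed

lemma onto_dim:
  fixes f :: "'a::real_vector \<Rightarrow> 'b::real_vector"
  assumes lin: "linear f" and S: "subspace S" and T: "subspace T"
    and fS: "S = span CS" "finite CS" and fT: "T = span CT" "finite CT"
    and dims: "dim S = dim T" and inj: "inj_on f S" and sub: "f ` S \<subseteq> T"
  shows "f ` S = T"
proof -
  obtain B where B: "B \<subseteq> S" "independent B" "S \<subseteq> span B" "card B = dim S"
    using basis_exists by blast
  have finB: "finite B" using independent_span_bound[OF fS(2) B(2)] B(1) fS(1) by auto
  obtain D where D: "D \<subseteq> T" "independent D" "T \<subseteq> span D" "card D = dim T"
    using basis_exists by blast
  have finD: "finite D" using independent_span_bound[OF fT(2) D(2)] D(1) fT(1) by auto
  have spB: "span B = S" using B S by (simp add: span_minimal span_subspace subset_antisym)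
  have indf: "independent (f ` B)"
    using linear_independent_injective_image[OF lin B(2)] inj spB by simp
  have cardf: "card (f ` B) = card B" using card_image inj B(1) inj_on_subset by blast
  have "T \<subseteq> span (f ` B)"
  proof
    fix x assume xT: "x \<in> T"
    show "x \<in> span (f ` B)"
    proof (rule ccontr)
      assume nx: "x \<notin> span (f ` B)"
      then have xn: "x \<notin> f ` B" using span_base by blast
      have ind2: "independent (insert x (f ` B))" using indf nx by (simp add: independent_insert)
      have "insert x (f ` B) \<subseteq> span D" using xT sub B(1) D(3) by blast
      from independent_span_bound[OF finD ind2 this]
      have "card (insert x (f ` B)) \<le> card D" by blast
      moreover have "card (insert x (f ` B)) = card B + 1"
        using xn finB cardf by simp
      ultimately show False using B(4) D(4) dims by simp
    qed
  qed
  also have "span (f ` B) = f ` S" using span_linear_image[OF lin] spB by simp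
  finally show ?thesis using sub by blast
qed



lemma below_bound:
  fixes K :: "'v::real_normed_vector \<Rightarrow> 'v"
  assumes blK: "bounded_linear K" and cK: "compact (closure (K ` cball 0 1))"
    and injIK: "\<And>x. x - K x = 0 \<Longrightarrow> x = 0"
  shows "\<exists>c>0. \<forall>x. c * norm x \<le> norm (x - K x)"
proof (rule ccontr)
  assume neg: "\<not> ?thesis"
  have "\<forall>n::nat. \<exists>x. norm (x - K x) < (1 / (real n + 1)) * norm x"
  proof
    fix n :: nat
    have "1 / (real n + 1) > 0" by simp
    then show "\<exists>x. norm (x - K x) < (1 / (real n + 1)) * norm x"
      using neg by (meson not_le)
  qed
  then obtain x where x: "\<And>n. norm (x n - K (x n)) < (1 / (real n + 1)) * norm (x n)"
    by metis
  have lin: "linear K" using blK bounded_linear.linear by blast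
  have xn0: "x n \<noteq> 0" for n
  proof
    assume "x n = 0"
    then show False using x[of n] lin by (simp add: linear_0)
  qed
  define u where "u n = (1 / norm (x n)) *\<^sub>R x n" for n
  have nu: "norm (u n) = 1" for n using xn0 unfolding u_def by simp
  have Ku: "K (u n) = (1 / norm (x n)) *\<^sub>R K (x n)" for n
    unfolding u_def using lin by (simp add: linear_scale)
  have du: "norm (u n - K (u n)) < 1 / (real n + 1)" for n
  proof -
    have "u n - K (u n) = (1 / norm (x n)) *\<^sub>R (x n - K (x n))"
      using Ku unfolding u_def by (simp add: scaleR_diff_right)
    then have "norm (u n - K (u n)) = norm (x n - K (x n)) / norm (x n)" by simp
    also have "\<dots> < 1 / (real n + 1)"
      using x[of n] xn0 by (simp add: divide_less_eq)
    finally show ?thesis .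
  qed
  have "\<forall>n. K (u n) \<in> closure (K ` cball 0 1)"
  proof
    fix n
    have "u n \<in> cball 0 1" using nu[of n] by simp
    then have "K (u n) \<in> K ` cball 0 1" by blast
    then show "K (u n) \<in> closure (K ` cball 0 1)" using closure_subset by blast
  qed
  then obtain l r where r: "strict_mono r" and lr: "((\<lambda>n. K (u n)) \<circ> r) \<longlonglongrightarrow> l"
    using compact_imp_seq_compact[OF cK] unfolding seq_compact_def by metis
  have d0: "(\<lambda>n. u n - K (u n)) \<longlonglongrightarrow> 0"
  proof (rule tendsto_norm_zero_cancel, rule Lim_null_comparison)
    show "\<forall>\<^sub>F n in sequentially. norm (norm (u n - K (u n))) \<le> 1 / (real n + 1)"
      using du by (auto intro!: always_eventually less_imp_le)
    show "(\<lambda>n. 1 / (real n + 1)) \<longlonglongrightarrow> 0"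
      using LIMSEQ_inverse_real_of_nat by (simp add: inverse_eq_divide add.commute)
  qed
  have d0r: "(\<lambda>n. u (r n) - K (u (r n))) \<longlonglongrightarrow> 0"
    using LIMSEQ_subseq_LIMSEQ[OF d0 r] by (simp add: o_def)
  have ur: "(\<lambda>n. u (r n)) \<longlonglongrightarrow> l"
  proof -
    have "(\<lambda>n. K (u (r n)) + (u (r n) - K (u (r n)))) \<longlonglongrightarrow> l + 0"
      using lr d0r by (intro tendsto_add) (auto simp: o_def)
    then show ?thesis by simp
  qed
  have "(\<lambda>n. norm (u (r n))) \<longlonglongrightarrow> norm l" using ur by (rule tendsto_norm)
  then have nl: "norm l = 1" using nu by (simp add: LIMSEQ_const_iff)
  have "(\<lambda>n. K (u (r n))) \<longlonglongrightarrow> K l" using bounded_linear.tendsto[OF blK ur] .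
  moreover have "(\<lambda>n. K (u (r n))) \<longlonglongrightarrow> l" using lr by (simp add: o_def)
  ultimately have "K l = l" using LIMSEQ_unique by blast
  then have "l = 0" using injIK[of l] by simp
  then show False using nl by simp
qed
theorem theoremt:
  fixes PV :: "nat \<Rightarrow> 'v::banach \<Rightarrow> 'v"
    and PW :: "nat \<Rightarrow> 'w::banach \<Rightarrow> 'w"
    and L L0 L1 :: "'v \<Rightarrow> 'w"
    and R R0 R1 :: "'w \<Rightarrow> 'v"
    and R1N :: "nat \<Rightarrow> 'w \<Rightarrow> 'v"
    and KN :: "nat \<Rightarrow> 'v \<Rightarrow> 'v"
    and K :: "'v \<Rightarrow> 'v"
    and W' :: "'w set"
    and IW :: "nat \<Rightarrow> 'w \<Rightarrow> 'w"
    and N0 :: nat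
  assumes sepV: "separable_space (euclidean :: 'v topology)"
    and sepW: "separable_space (euclidean :: 'w topology)"
    and PV_proj: "\<And>N. bounded_projection (PV N)"
    and PW_proj: "\<And>N. bounded_projection (PW N)"
    and PV_fd: "\<And>N. fin_dim_subspace (range (PV N))"
    and PW_fd: "\<And>N. fin_dim_subspace (range (PW N))"
    and PV_strong: "\<And>x. (\<lambda>N. PV N x) \<longlonglongrightarrow> x"
    and PW_strong: "\<And>y. (\<lambda>N. PW N y) \<longlonglongrightarrow> y"
    and adm: "admissible PV PW L L0 L1 R R0 R1"
    and L_inv: "bij L"
    and R_inv: "bij R"
    and K_def: "\<And>x. R (L x) = x - K x"
    and K_compact: "compact_operator K"
    and R1N_lin: "\<And>N. linear (R1N N)"
    and R1N_maps: "\<And>N. R1N N ` range (PW N) \<subseteq> range (PV N)"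
    and KN_bl: "\<And>N. bounded_linear (KN N)"
    and KN_eq: "\<And>N u. u \<in> range (PV N) \<Longrightarrow>
                 R0 (L0 u + PW N (L1 u)) + R1N N (L0 u + PW N (L1 u)) = u - KN N u"
    and KN_conv: "(\<lambda>N. onorm (\<lambda>x. KN N x - K x)) \<longlonglongrightarrow> 0"
    and dims: "\<And>N. dim (range (PV N)) = dim (range (PW N))"
    and W'_sub: "subspace W'"
    and W'_dense: "closure W' = UNIV"
    and IW_lin: "\<And>N. linear (IW N)"
    and IW_idem: "\<And>N y. IW N (IW N y) = IW N y"
    and IW_conv: "\<And>u. u \<in> W' \<Longrightarrow> (\<lambda>N. norm (u - IW N u)) \<longlonglongrightarrow> 0"
    and IW_range: "\<And>N. IW N ` W' = range (PW N)"
    and AI_inv: "\<And>N. N \<ge> N0 \<Longrightarrow>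
                   bij_betw (\<lambda>u. L0 u + IW N (L1 u)) (range (PV N)) (range (PW N))"
  shows "\<exists>N1. \<forall>N\<ge>N1. \<forall>f\<in>W'.
     (let AP = (\<lambda>u. L0 u + PW N (L1 u));
          AI = (\<lambda>u. L0 u + IW N (L1 u));
          APinv = the_inv_into (range (PV N)) AP;
          AIinv = the_inv_into (range (PV N)) AI;
          uN = APinv (PW N f)
      in norm (uN - AIinv (IW N f))
         \<le> opnorm_on (IW N ` W') AIinv * norm (IW N (f - L1 uN) - PW N (f - L1 uN)))"
  proof -
  have blL0: "bounded_linear L0" and blL1: "bounded_linear L1"
    and L0comm: "\<And>N x. L0 (PV N x) = PW N (L0 x)"
    and lfL: "left_fredholm L R"
    and blR0: "bounded_linear R0"
    using adm unfolding admissible_def by auto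
  have blL: "bounded_linear L" and blR: "bounded_linear R"
    using lfL unfolding left_fredholm_def by auto
  have linL0: "linear L0" and linL1: "linear L1" and linR0: "linear R0"
    and linL: "linear L" and linR: "linear R"
    using blL0 blL1 blR0 blL blR bounded_linear.linear by blast+
  have linPV: "\<And>N. linear (PV N)" and linPW: "\<And>N. linear (PW N)"
    using PV_proj PW_proj unfolding bounded_projection_def
    using bounded_linear.linear by blast+
  have blK: "bounded_linear K" and cK: "compact (closure (K ` cball 0 1))"
    using K_compact unfolding compact_operator_def by auto
  have injIK: "x = 0" if "x - K x = 0" for x
  proof -
    have "R (L x) = R (L 0)" using that K_def linL linR by (simp add: linear_0)
    then have "L x = L 0" using R_inv by (simp add: bij_is_inj inj_eq)
    then show "x = 0" using L_inv by (simp add: bij_is_inj inj_eq)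
  qed
  obtain c where c: "c > 0" "\<And>x. c * norm x \<le> norm (x - K x)"
    using below_bound[OF blK cK injIK] by blast
  obtain N1' where N1': "\<And>N. N \<ge> N1' \<Longrightarrow> norm (onorm (\<lambda>x. KN N x - K x) - 0) < c"
    using LIMSEQ_D[OF KN_conv c(1)] by blast
  define N1 where "N1 = max N0 N1'"
  show ?thesis
  proof (intro exI[of _ N1] allI impI ballI, unfold Let_def)
    fix N f assume NN: "N \<ge> N1" and fW: "f \<in> W'"
    define SV where "SV = range (PV N)"
    define SW where "SW = range (PW N)"
    define AP where "AP = (\<lambda>u. L0 u + PW N (L1 u))"
    define AI where "AI = (\<lambda>u. L0 u + IW N (L1 u))"
    define APinv where "APinv = the_inv_into SV AP"
    define AIinv where "AIinv = the_inv_into SV AI"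
    have subSV: "subspace SV" unfolding SV_def
      using linear_subspace_image[OF linPV subspace_UNIV] .
    have subSW: "subspace SW" unfolding SW_def
      using linear_subspace_image[OF linPW subspace_UNIV] .
    obtain CS where CS: "finite CS" "SV = span CS"
      using PV_fd[of N] unfolding fin_dim_subspace_def SV_def by blast
    obtain CT where CT: "finite CT" "SW = span CT"
      using PW_fd[of N] unfolding fin_dim_subspace_def SW_def by blast
    have linAP: "linear AP" unfolding AP_def
      using linear_compose_add[OF linL0 linear_compose[OF linL1 linPW]] by (simp add: o_def)
    have linAI: "linear AI" unfolding AI_def
      using linear_compose_add[OF linL0 linear_compose[OF linL1 IW_lin]] by (simp add: o_def)
    have APmap: "AP ` SV \<subseteq> SW"
    proof
      fix y assume "y \<in> AP ` SV"
      then obtain x where y: "y = AP (PV N x)" unfolding SV_def by blast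
      have "y = PW N (L0 x) + PW N (L1 (PV N x))" unfolding y AP_def L0comm ..
      then show "y \<in> SW" unfolding SW_def using subSW[unfolded SW_def]
        by (simp add: subspace_add)
    qed
    have NN0: "N \<ge> N0" and NN1: "N \<ge> N1'" using NN N1_def by auto
    have ker: "u = 0" if uS: "u \<in> SV" and Au: "AP u = 0" for u
    proof (rule ccontr)
      assume un: "u \<noteq> 0"
      have "R0 (AP u) + R1N N (AP u) = u - KN N u"
        using KN_eq[of u N] uS unfolding SV_def AP_def by blast
      then have "u - KN N u = 0" using Au linR0 R1N_lin[of N] by (simp add: linear_0)
      then have "u - K u = KN N u - K u" by (simp add: algebra_simps)
      then have "c * norm u \<le> norm (KN N u - K u)" using c(2)[of u] by simp
      also have "\<dots> \<le> onorm (\<lambda>x. KN N x - K x) * norm u"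
        using onorm[OF bounded_linear_sub[OF KN_bl blK]] by simp
      finally have "c * norm u \<le> onorm (\<lambda>x. KN N x - K x) * norm u" .
      moreover have "onorm (\<lambda>x. KN N x - K x) < c" using N1'[OF NN1] by simp
      moreover have "norm u > 0" using un by simp
      ultimately show False by simp
    qed
    have injAP: "inj_on AP SV"
    proof (rule inj_onI)
      fix x y assume "x \<in> SV" "y \<in> SV" "AP x = AP y"
      then have "x - y \<in> SV" "AP (x - y) = 0"
        using subSV linAP by (auto simp: subspace_diff linear_diff)
      then show "x = y" using ker[of "x - y"] by simp
    qed
    have APonto: "AP ` SV = SW"
      using onto_dim[OF linAP subSV subSW CS(2,1) CT(2,1) _ injAP APmap] dims[of N]
      unfolding SV_def SW_def by simp
    have bijAP: "bij_betw AP SV SW" using injAP APonto by (simp add: bij_betw_def)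
    have bijAI: "bij_betw AI SV SW" using AI_inv[OF NN0] unfolding AI_def SV_def SW_def .
    have injAI: "inj_on AI SV" using bijAI bij_betw_def by blast
    have PWf: "PW N f \<in> SW" unfolding SW_def by simp
    have IWf: "IW N f \<in> SW" using IW_range[of N] fW unfolding SW_def by blast
    define uN where "uN = APinv (PW N f)"
    define v where "v = AIinv (IW N f)"
    have uN: "uN \<in> SV" "AP uN = PW N f"
      using bijAP PWf unfolding uN_def APinv_def
      by (auto intro: the_inv_into_into f_the_inv_into_f_bij_betw simp: bij_betw_def)
    have v: "v \<in> SV" "AI v = IW N f"
      using bijAI IWf unfolding v_def AIinv_def
      by (auto intro: the_inv_into_into f_the_inv_into_f_bij_betw simp: bij_betw_def)
    define w where "w = IW N (f - L1 uN) - PW N (f - L1 uN)"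
    have vu: "v - uN \<in> SV" using v uN subSV by (simp add: subspace_diff)
    have AIvu: "AI (v - uN) = w"
    proof -
      have "AI (v - uN) = AI v - AI uN" using linAI by (simp add: linear_diff)
      also have "AI uN = AP uN - PW N (L1 uN) + IW N (L1 uN)" unfolding AI_def AP_def by simp
      finally show ?thesis using v(2) uN(2) unfolding w_def
        using IW_lin[of N] linPW[of N] by (simp add: linear_diff algebra_simps)
    qed
    have wS: "w \<in> SW" using AIvu vu bijAI bij_betwE by metis
    have AIinvw: "AIinv w = v - uN"
      unfolding AIinv_def using AIvu vu the_inv_into_f_f[OF injAI] by metis
    have PWid: "PW N y = y" if "y \<in> SW" for y
      using that PW_proj[of N] unfolding SW_def bounded_projection_def by auto
    note il = inv_lin[OF linAI bijAI subSV]
    define g where "g = (\<lambda>y. AIinv (PW N y))"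
    have lin_g: "linear g"
    proof (rule linearI)
      fix x y
      show "g (x + y) = g x + g y" unfolding g_def AIinv_def
        using il(1)[of "PW N x" "PW N y"] linPW[of N] unfolding SW_def
        by (simp add: linear_add)
    next
      fix r x
      show "g (r *\<^sub>R x) = r *\<^sub>R g x" unfolding g_def AIinv_def
        using il(2)[where y="PW N x" and c=r and z="PW N x"] linPW[of N] unfolding SW_def
        by (simp add: linear_scale)
    qed
    obtain M where M: "\<forall>y\<in>span CT. norm (g y) \<le> M * norm y"
      using fd_bound[OF CT(1)] lin_g by blast
    have bd: "\<forall>y\<in>SW. norm (AIinv y) \<le> M * norm y"
      using M PWid CT(2) unfolding g_def by simp
    have sc: "\<forall>x\<in>SW. \<forall>r. AIinv (r *\<^sub>R x) = r *\<^sub>R AIinv x"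
      using il(2)[where z=0] subspace_0[OF subSW] unfolding AIinv_def by blast
    have "norm (AIinv w) \<le> opnorm_on SW AIinv * norm w"
      by (rule opnorm_on_le[OF subSW bd sc wS])
    then have final: "norm (uN - v) \<le> opnorm_on SW AIinv * norm w"
      using AIinvw by (simp add: norm_minus_commute)
    show "norm (the_inv_into (range (PV N)) (\<lambda>u. L0 u + PW N (L1 u)) (PW N f) -
           the_inv_into (range (PV N)) (\<lambda>u. L0 u + IW N (L1 u)) (IW N f))
         \<le> opnorm_on (IW N ` W') (the_inv_into (range (PV N)) (\<lambda>u. L0 u + IW N (L1 u))) *
           norm (IW N (f - L1 (the_inv_into (range (PV N)) (\<lambda>u. L0 u + PW N (L1 u)) (PW N f))) -
                 PW N (f - L1 (the_inv_into (range (PV N)) (\<lambda>u. L0 u + PW N (L1 u)) (PW N f))))"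
      using final unfolding uN_def v_def w_def APinv_def AIinv_def AP_def AI_def SV_def SW_def IW_range .
  qed
qed

end
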